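(* Let $T>0$, let $h:(0,\infty)\to(0,\infty)$ be bounded with $\lim_{u\to0^+}h(u)=\lim_{u\to+\infty}h(u)=0$, and let $A\in C^1([0,T]\times(0,1)^n;\mathbb S(n))$ satisfy $|A_{ij}(s,\mu)|\le(\mu^i+\mu^j)h(\mu^j/\mu^i)$ for all $(i,j)\in\mathbb E$ and $(s,\mu)\in[0,T]\times(0,1)^n$. There exist constants $K>1$ and $c_0>0$, depending only on $n$, $\omega_{\min}$, $\omega_{\max}$ and $h$, such that the following holds. Let $\epsilon>0$, $\mu\in\mathcal P_\epsilon(\mathbb G)$, $0<t_0<t_1\le T$, and let $\rho\in C^1([0,t_1];(0,1)^n)$ be a classical solution of $\dot\rho(s)=\nabla_{\mathbb G}\cdot A(s,\rho(s))+\Delta_{\mathbb G}\rho(s)$, $\rho(0)=\mu$. If $\delta\in(0,\epsilon/K)$ and $t_0$, $t_1$ are, respectively, the first times such that $\min_i\rho_i(t_0)=\delta$ and $\min_i\rho_i(t_1)=\delta/(2K)$, then $t_1-t_0\ge c_0$.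
   Context: $\mathbb G=(\mathbb V,\mathbb E,\omega)$: finite, connected, simple undirected graph, $\mathbb V=\{1,\dots,n\}$, edges ordered pairs with $(i,j)\in\mathbb E\iff(j,i)\in\mathbb E$, symmetric weights $\omega_{ij}>0$ iff $(i,j)\in\mathbb E$; $\omega_{\min},\omega_{\max}$ the min/max edge weights. $\mathbb S(n)$: skew-symmetric $n\times n$ matrices. $(\nabla_{\mathbb G}\cdot m)^i=\sum_{j\ne i}\sqrt{\omega_{ij}}m^{ji}$; $(\Delta_{\mathbb G}u)^i=\sum_j\omega_{ij}(u^j-u^i)$. $\mathcal P_\epsilon(\mathbb G)$: probability vectors in $\mathbb R^n$ with all entries $>\epsilon$. *)

theory Defs
  imports "HOL-Analysis.Analysis"
begin

text \<open>Vertices of the graph are the elements of a finite type 'n (n = CARD('n)).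
  Weights: w i j > 0 iff (i,j) is an edge, w i j = 0 otherwise.\<close>

definition weighted_graph :: "('n::finite \<Rightarrow> 'n \<Rightarrow> real) \<Rightarrow> bool" where
  "weighted_graph w \<longleftrightarrow>
     (\<forall>i j. w i j = w j i) \<and> (\<forall>i j. 0 \<le> w i j) \<and> (\<forall>i. w i i = 0) \<and>
     (\<forall>i j. (i, j) \<in> {(a, b). 0 < w a b}\<^sup>*)"

definition min_max_weights :: "('n::finite \<Rightarrow> 'n \<Rightarrow> real) \<Rightarrow> real \<Rightarrow> real \<Rightarrow> bool" where
  "min_max_weights w wmin wmax \<longleftrightarrow>
     (\<forall>i j. 0 < w i j \<longrightarrow> wmin \<le> w i j \<and> w i j \<le> wmax) \<and>
     (\<exists>i j. 0 < w i j \<and> w i j = wmin) \<and> (\<exists>i j. 0 < w i j \<and> w i j = wmax)"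

definition graph_div :: "('n::finite \<Rightarrow> 'n \<Rightarrow> real) \<Rightarrow> real^'n^'n \<Rightarrow> real^'n" where
  "graph_div w m = (\<chi> i. \<Sum>j\<in>UNIV - {i}. sqrt (w i j) * m $ j $ i)"

definition graph_lap :: "('n::finite \<Rightarrow> 'n \<Rightarrow> real) \<Rightarrow> real^'n \<Rightarrow> real^'n" where
  "graph_lap w u = (\<chi> i. \<Sum>j\<in>UNIV. w i j * (u $ j - u $ i))"

definition open_cube :: "(real^'n::finite) set" where
  "open_cube = {x. \<forall>i. 0 < x $ i \<and> x $ i < 1}"

definition prob_eps :: "real \<Rightarrow> (real^'n::finite) set" where
  "prob_eps \<epsilon> = {x. (\<Sum>i\<in>UNIV. x $ i) = 1 \<and> (\<forall>i. x $ i > \<epsilon>)}"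

definition C1_on :: "'a::euclidean_space set \<Rightarrow> ('a \<Rightarrow> 'b::real_normed_vector) \<Rightarrow> bool" where
  "C1_on S f \<longleftrightarrow> (\<exists>f'. (\<forall>x\<in>S. (f has_derivative blinfun_apply (f' x)) (at x within S))
                       \<and> continuous_on S f')"

definition vmin :: "real^'n::finite \<Rightarrow> real" where
  "vmin x = Min (range (\<lambda>i. x $ i))"

end

theory Submission
  imports Defs
begin

lemma comp_deriv:
  fixes \<rho> :: "real \<Rightarrow> real^'n::finite"
  assumes "(\<rho> has_vector_derivative D) (at s within S)"
  shows "((\<lambda>t. \<rho> t $ i) has_real_derivative D $ i) (at s within S)"
  using bounded_linear.has_derivative[OF bounded_linear_vec_nth assms[unfolded has_vector_derivative_def]]
proof -
  have e: "(\<lambda>x. x * D $ i) = (*) (D $ i)" by (auto simp: fun_eq_iff)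
  have "((\<lambda>t. \<rho> t $ i) has_derivative (\<lambda>x. (x *\<^sub>R D) $ i)) (at s within S)"
    using bounded_linear.has_derivative[OF bounded_linear_vec_nth assms[unfolded has_vector_derivative_def]] .
  then show ?thesis unfolding has_field_derivative_def e[symmetric] by simp
qed

lemma mono_lemma:
  fixes f :: "'n::finite \<Rightarrow> real \<Rightarrow> real"
  assumes ab: "a \<le> b" and cont: "\<And>j. continuous_on {a..b} (f j)"
    and iscont: "\<And>j t. t\<in>{a..<b} \<Longrightarrow> isCont (f j) t"
    and incr: "\<And>i t. t\<in>{a..<b} \<Longrightarrow> (\<forall>j. f i t \<le> f j t) \<Longrightarrow> eventually (\<lambda>u. f i t < f i u) (at_right t)"
    and start: "\<And>j. c \<le> f j a"
  shows "c \<le> f j b"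
proof -
  define S where "S = {t\<in>{a..b}. \<forall>j. c \<le> f j t}"
  have Seq: "S = (\<Inter>j. {a..b} \<inter> f j -` {c..})" by (auto simp: S_def)
  have cj: "closed ({a..b} \<inter> f j -` {c..})" for j by (rule continuous_closed_preimage[OF cont]) auto
  have "closed S" unfolding Seq using cj by (intro closed_INT) blast
  moreover have "a \<in> S" using ab start by (auto simp: S_def)
  moreover have bdd: "bdd_above S" by (auto simp: S_def bdd_above_def)
  ultimately have sS: "Sup S \<in> S" using closed_contains_Sup by blast
  define s where "s = Sup S"
  have "s = b"
  proof (rule ccontr)
    assume "s \<noteq> b"
    with sS have sab: "s \<in> {a..<b}" by (auto simp: S_def s_def)
    have ev: "eventually (\<lambda>u. c \<le> f j u) (at_right s)" for j
    proof (cases "c < f j s")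
      case True
      have "(f j \<longlongrightarrow> f j s) (at_right s)"
        using iscont[OF sab, unfolded isCont_def] by (rule tendsto_mono[rotated]) (simp add: at_le)
      then have "eventually (\<lambda>u. c < f j u) (at_right s)" using True by (rule order_tendstoD(1))
      then show ?thesis by eventually_elim auto
    next
      case False
      have "c \<le> f j s" using sS by (simp add: S_def s_def)
      then have fc: "f j s = c" using False by linarith
      then have "\<forall>k. f j s \<le> f k s" using sS by (auto simp: S_def s_def)
      from incr[OF sab this] show ?thesis by (rule eventually_mono) (simp add: fc)
    qed
    then have "eventually (\<lambda>u. \<forall>j. c \<le> f j u) (at_right s)" by (intro eventually_all_finite) auto
    moreover have "eventually (\<lambda>u. u \<in> {s<..<b}) (at_right s)" using sab eventually_at_right_real by auto
    ultimately have "eventually (\<lambda>u. u\<in>{s<..<b} \<and> (\<forall>j. c \<le> f j u)) (at_right s)" by eventually_elim auto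
    then obtain u where u: "u\<in>{s<..<b}" "\<forall>j. c \<le> f j u"
      using eventually_happens trivial_limit_at_right_real by blast
    then have "u \<in> S" using sab by (auto simp: S_def)
    then have "u \<le> s" unfolding s_def using bdd by (rule cSup_upper)
    then show False using u by auto
  qed
  then show ?thesis using sS by (auto simp: S_def s_def)
qed

lemma term_bound:
  fixes h :: "real \<Rightarrow> real"
  assumes w0: "0 \<le> w" and wb: "0 < w \<Longrightarrow> wmin \<le> w \<and> w \<le> wmax" and wmin: "0 < wmin" and wmax: "0 \<le> wmax"
    and xi: "0 < xi" and xij: "xi \<le> xj"
    and ab: "0 < w \<Longrightarrow> \<bar>a\<bar> \<le> (xj + xi) * h (xi / xj)"
    and M: "\<forall>u>0. h u \<le> M" and hp: "\<forall>u>0. 0 < h u" and M0: "0 \<le> M"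
    and d: "\<forall>u. 0 < u \<and> u < d \<longrightarrow> h u < sqrt wmin / 4" and d0: "0 < d"
    and L: "2 \<le> L" "2 / d \<le> L"
  shows "- (sqrt wmax * (1 + L) * M) * xi \<le> sqrt w * a + w * (xj - xi)"
proof (cases "w = 0")
  case True
  have "0 \<le> sqrt wmax * (1 + L) * M" using M0 L wmax by simp
  then show ?thesis using True xi by (simp add: mult_nonneg_nonneg)
next
  case False
  then have wp: "0 < w" using w0 by simp
  have wmm: "wmin \<le> w" "w \<le> wmax" using wb[OF wp] by auto
  have xj: "0 < xj" using xi xij by simp
  have habs: "\<bar>a\<bar> \<le> (xj + xi) * h (xi / xj)" using ab[OF wp] .
  have sa: "sqrt w * a \<ge> - (sqrt w * \<bar>a\<bar>)"
    by (metis abs_ge_minus_self abs_mult abs_of_nonneg minus_le_iff real_sqrt_ge_zero w0)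
  show ?thesis
  proof (cases "L * xi \<le> xj")
    case True
    have "xi / xj \<le> 1 / L" using True xi xj L by (simp add: field_simps)
    also have "1 / L < d" using L d0 by (simp add: field_simps)
    finally have hl: "h (xi / xj) < sqrt wmin / 4" using d xi xj by simp
    have sw: "sqrt wmin \<le> sqrt w" using wmm by simp
    have "\<bar>a\<bar> \<le> (xj + xi) * (sqrt wmin / 4)"
    proof -
      have "(xj + xi) * h (xi / xj) \<le> (xj + xi) * (sqrt wmin / 4)"
        using hl xi xj by (intro mult_left_mono) auto
      then show ?thesis using habs by linarith
    qed
    also have "\<dots> \<le> (2 * xj) * (sqrt w / 4)"
      using sw xij xi wmin by (intro mult_mono) auto
    finally have "sqrt w * \<bar>a\<bar> \<le> sqrt w * ((2 * xj) * (sqrt w / 4))"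
      using w0 by (intro mult_left_mono) auto
    also have "\<dots> = w * xj / 2" using w0 by (simp add: field_simps)
    finally have A1: "sqrt w * \<bar>a\<bar> \<le> w * xj / 2" .
    have "2 * xi \<le> L * xi" using L xi by (intro mult_right_mono) auto
    then have "2 * xi \<le> xj" using True by linarith
    then have "xj / 2 \<le> xj - xi" by linarith
    then have "w * (xj / 2) \<le> w * (xj - xi)" using w0 by (intro mult_left_mono) auto
    then have "w * xj / 2 \<le> w * (xj - xi)" by simp
    moreover have "0 \<le> sqrt wmax * (1 + L) * M * xi" using M0 L xi wmax by simp
    moreover have "- (sqrt wmax * (1 + L) * M) * xi = - (sqrt wmax * (1 + L) * M * xi)" by simp
    ultimately show ?thesis using A1 sa by linarith
  next
    case False
    have "h (xi / xj) \<le> M" using M xi xj by simp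
    have "(xj + xi) * h (xi / xj) \<le> (xj + xi) * M" using \<open>h (xi / xj) \<le> M\<close> xi xj by (intro mult_left_mono) auto
    then have "\<bar>a\<bar> \<le> (xj + xi) * M" using habs by linarith
    also have "\<dots> \<le> ((1 + L) * xi) * M" using False M0 by (intro mult_right_mono) (auto simp: distrib_right)
    finally have "sqrt w * \<bar>a\<bar> \<le> sqrt wmax * (((1 + L) * xi) * M)"
      using wmm w0 xi M0 L by (intro mult_mono) auto
    moreover have "0 \<le> w * (xj - xi)" using w0 xij by simp
    ultimately show ?thesis using sa by (simp add: algebra_simps)
  qed
qed

lemma vmin_le: "vmin x \<le> x $ i"
  unfolding vmin_def by (rule Min_le) auto

lemma vmin_ex: "\<exists>i. vmin x = x $ i"
proof -
  have "vmin x \<in> range (\<lambda>i. x $ i)" unfolding vmin_def by (rule Min_in) auto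
  then show ?thesis by auto
qed

lemma D_bound:
  fixes h :: "real \<Rightarrow> real" and x :: "real^'n::finite" and B :: "real^'n^'n"
  assumes wg: "weighted_graph w" and mm: "min_max_weights w wmin wmax" and wmin: "0 < wmin"
    and xc: "x \<in> open_cube"
    and Bb: "\<forall>i j. 0 < w i j \<longrightarrow> \<bar>B $ i $ j\<bar> \<le> (x $ i + x $ j) * h (x $ j / x $ i)"
    and imin: "\<forall>k. x $ i \<le> x $ k"
    and M: "\<forall>u>0. h u \<le> M" and hp: "\<forall>u>0. 0 < h u" and M0: "0 \<le> M"
    and d: "\<forall>u. 0 < u \<and> u < d \<longrightarrow> h u < sqrt wmin / 4" and d0: "0 < d"
    and L: "2 \<le> L" "2 / d \<le> L"
  shows "- (real CARD('n) * (sqrt wmax * (1 + L) * M)) * x $ i \<le> (graph_div w B + graph_lap w x) $ i"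
proof -
  have sym: "\<And>i j. w i j = w j i" and w0: "\<And>i j. 0 \<le> w i j" and wii: "\<And>i. w i i = 0"
    using wg by (auto simp: weighted_graph_def)
  have wb: "\<And>i j. 0 < w i j \<Longrightarrow> wmin \<le> w i j \<and> w i j \<le> wmax" using mm by (auto simp: min_max_weights_def)
  have wmax: "0 \<le> wmax" using mm by (auto simp: min_max_weights_def)
  have xp: "\<And>k. 0 < x $ k" using xc by (auto simp: open_cube_def)
  have gd: "graph_div w B $ i = (\<Sum>j\<in>UNIV. sqrt (w i j) * B $ j $ i)"
    unfolding graph_div_def by (simp add: sum_diff1 wii)
  have gl: "graph_lap w x $ i = (\<Sum>j\<in>UNIV. w i j * (x $ j - x $ i))"
    unfolding graph_lap_def by simp
  have T: "- (sqrt wmax * (1 + L) * M) * x $ i \<le> sqrt (w i j) * B $ j $ i + w i j * (x $ j - x $ i)" for j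
  proof -
    have ab: "0 < w i j \<Longrightarrow> \<bar>B $ j $ i\<bar> \<le> (x $ j + x $ i) * h (x $ i / x $ j)"
      using Bb sym by metis
    show ?thesis by (rule term_bound[OF w0 wb wmin wmax xp imin[rule_format] ab M hp M0 d d0 L])
  qed
  have "(\<Sum>j::'n\<in>UNIV. - (sqrt wmax * (1 + L) * M) * x $ i)
        \<le> (\<Sum>j\<in>UNIV. sqrt (w i j) * B $ j $ i + w i j * (x $ j - x $ i))"
    by (intro sum_mono T)
  then show ?thesis by (simp add: gd gl sum.distrib)
qed

theorem lemma2p2:
  fixes h :: "real \<Rightarrow> real" and wmin wmax :: real
  assumes h_pos: "\<forall>u>0. h u > 0"
    and h_bdd: "\<exists>M. \<forall>u>0. h u \<le> M"
    and h_0: "(h \<longlongrightarrow> 0) (at_right 0)"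
    and h_inf: "(h \<longlongrightarrow> 0) at_top"
  shows "\<exists>K c0. K > 1 \<and> c0 > 0 \<and>
    (\<forall>(w :: 'n::finite \<Rightarrow> 'n \<Rightarrow> real) (T::real) (A :: real \<Rightarrow> real^'n \<Rightarrow> real^'n^'n)
       (\<epsilon>::real) (\<mu>::real^'n) (\<delta>::real) (t0::real) (t1::real) (\<rho> :: real \<Rightarrow> real^'n).
      weighted_graph w \<and> min_max_weights w wmin wmax \<and>
      T > 0 \<and>
      C1_on ({0..T} \<times> open_cube) (\<lambda>(s, x). A s x) \<and>
      (\<forall>s\<in>{0..T}. \<forall>x\<in>open_cube. \<forall>i j. A s x $ i $ j = - A s x $ j $ i) \<and>
      (\<forall>s\<in>{0..T}. \<forall>x\<in>open_cube. \<forall>i j. 0 < w i j \<longrightarrow>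
          \<bar>A s x $ i $ j\<bar> \<le> (x $ i + x $ j) * h (x $ j / x $ i)) \<and>
      \<epsilon> > 0 \<and> \<mu> \<in> prob_eps \<epsilon> \<and>
      0 < t0 \<and> t0 < t1 \<and> t1 \<le> T \<and>
      C1_on {0..t1} \<rho> \<and> (\<forall>s\<in>{0..t1}. \<rho> s \<in> open_cube) \<and>
      (\<forall>s\<in>{0..t1}. (\<rho> has_vector_derivative
            (graph_div w (A s (\<rho> s)) + graph_lap w (\<rho> s))) (at s within {0..t1})) \<and>
      \<rho> 0 = \<mu> \<and>
      0 < \<delta> \<and> \<delta> < \<epsilon> / K \<and>
      vmin (\<rho> t0) = \<delta> \<and> (\<forall>t\<in>{0..<t0}. vmin (\<rho> t) \<noteq> \<delta>) \<and>
      vmin (\<rho> t1) = \<delta> / (2 * K) \<and> (\<forall>t\<in>{0..<t1}. vmin (\<rho> t) \<noteq> \<delta> / (2 * K))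
      \<longrightarrow> t1 - t0 \<ge> c0)"
proof (cases "0 < wmin \<and> wmin \<le> wmax")
  case False
  have vac: "\<forall>w::'n\<Rightarrow>'n\<Rightarrow>real. \<not> min_max_weights w wmin wmax"
    using False by (auto simp: min_max_weights_def)
  show ?thesis
    apply (rule exI[of _ "2::real"], rule exI[of _ "1::real"])
    apply (intro conjI)
      apply simp
     apply simp
    apply (intro allI impI)
    apply (elim conjE)
    using vac by blast
next
  case True
  have wmin: "0 < wmin" and wmax: "0 \<le> wmax" using True by auto
  obtain M where M: "\<forall>u>0. h u \<le> M" using h_bdd by blast
  have M0: "0 \<le> M" using M h_pos by (meson less_le_trans less_imp_le zero_less_one)
  define \<eta> where "\<eta> = sqrt wmin / 4"
  have eta: "0 < \<eta>" using wmin by (simp add: \<eta>_def)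
  have "eventually (\<lambda>u. h u < \<eta>) (at_right 0)" using order_tendstoD(2)[OF h_0 eta] .
  then obtain b where b: "b > 0" "\<forall>y>0. y < b \<longrightarrow> h y < \<eta>" by (auto simp: eventually_at_right_field)
  define d where "d = b"
  have d: "\<forall>u. 0 < u \<and> u < d \<longrightarrow> h u < sqrt wmin / 4" and d0: "0 < d"
    using b by (auto simp: d_def \<eta>_def)
  define L where "L = max 2 (2 / d)"
  have L: "2 \<le> L" "2 / d \<le> L" by (auto simp: L_def)
  define C where "C = real CARD('n) * (sqrt wmax * (1 + L) * M) + 1"
  define c0 where "c0 = ln 4 / C"
  have Cp: "0 < C" unfolding C_def using wmax L M0 by (simp add: add_nonneg_pos)
  have c0p: "0 < c0" unfolding c0_def using Cp by simp
  show ?thesis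
    apply (rule exI[of _ "2::real"], rule exI[of _ c0])
    apply (intro conjI allI impI)
      apply simp
     apply (rule c0p)
    apply (elim conjE)
    subgoal premises H for w T A \<epsilon> \<mu> \<delta> t0 t1 \<rho>
    proof -
      have wg: "weighted_graph w" and mm: "min_max_weights w wmin wmax"
        and tT: "t1 \<le> T" and t0p: "0 < t0" and t01: "t0 < t1"
        and cube: "\<forall>s\<in>{0..t1}. \<rho> s \<in> open_cube"
        and der: "\<forall>s\<in>{0..t1}. (\<rho> has_vector_derivative
            (graph_div w (A s (\<rho> s)) + graph_lap w (\<rho> s))) (at s within {0..t1})"
        and Ab: "\<forall>s\<in>{0..T}. \<forall>x\<in>open_cube. \<forall>i j. 0 < w i j \<longrightarrow>
          \<bar>A s x $ i $ j\<bar> \<le> (x $ i + x $ j) * h (x $ j / x $ i)"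
        and vt0: "vmin (\<rho> t0) = \<delta>" and vt1: "vmin (\<rho> t1) = \<delta> / (2 * 2)" and dp: "0 < \<delta>"
        using H(1) H(2) H(11) H(9) H(10) H(13) H(14) H(6) H(18) H(20) H(16) by auto
      define D where "D s = graph_div w (A s (\<rho> s)) + graph_lap w (\<rho> s)" for s
      define f where "f i t = exp (C * t) * \<rho> t $ i" for i t
      have cder: "((\<lambda>t. \<rho> t $ i) has_real_derivative D s $ i) (at s within {0..t1})"
        if "s \<in> {0..t1}" for i s
        using comp_deriv der that unfolding D_def by blast
      have fder: "(f i has_real_derivative (exp (C * s) * C * \<rho> s $ i + exp (C * s) * D s $ i)) (at s within {0..t1})"
        if "s \<in> {0..t1}" for i s
      proof -
        have e: "((\<lambda>t. exp (C * t)) has_real_derivative exp (C * s) * C) (at s within {0..t1})"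
          by (auto intro!: derivative_eq_intros)
        have "((\<lambda>t. exp (C * t) * \<rho> t $ i) has_real_derivative (exp (C * s) * C * \<rho> s $ i + D s $ i * exp (C * s))) (at s within {0..t1})"
          by (rule DERIV_mult[OF e cder[OF that]])
        then show ?thesis unfolding f_def[abs_def] by (rule DERIV_cong) (simp add: algebra_simps)
      qed
      have int: "at s within {0..t1} = at s" if "s \<in> {t0..<t1}" for s
        using that t0p by (intro at_within_interior) auto
      have cont: "continuous_on {t0..t1} (f j)" for j
      proof -
        have "continuous_on {0..t1} (f j)" by (rule DERIV_continuous_on[OF fder])
        then show ?thesis by (rule continuous_on_subset) (use t0p in auto)
      qed
      have iscont: "isCont (f j) t" if "t \<in> {t0..<t1}" for j t
        using fder[of t j] that t0p int[OF that] by (auto intro: DERIV_isCont)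
      have incr: "eventually (\<lambda>u. f i t < f i u) (at_right t)"
        if t: "t \<in> {t0..<t1}" and imin: "\<forall>j. f i t \<le> f j t" for i t
      proof -
        have ts: "t \<in> {0..t1}" "t \<in> {0..T}" using t t0p tT by auto
        have x: "\<rho> t \<in> open_cube" using cube ts by blast
        have im: "\<forall>k. \<rho> t $ i \<le> \<rho> t $ k" using imin by (simp add: f_def)
        have Bb: "\<forall>i j. 0 < w i j \<longrightarrow> \<bar>A t (\<rho> t) $ i $ j\<bar> \<le> (\<rho> t $ i + \<rho> t $ j) * h (\<rho> t $ j / \<rho> t $ i)"
          using Ab ts x by blast
        have Db: "- (real CARD('n) * (sqrt wmax * (1 + L) * M)) * \<rho> t $ i \<le> D t $ i"
          unfolding D_def by (rule D_bound[OF wg mm wmin x Bb im M h_pos M0 d d0 L])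
        have xp: "0 < \<rho> t $ i" using x by (simp add: open_cube_def)
        have "exp (C * t) * \<rho> t $ i \<le> exp (C * t) * C * \<rho> t $ i + exp (C * t) * D t $ i"
        proof -
          have "\<rho> t $ i \<le> C * \<rho> t $ i + D t $ i" using Db unfolding C_def by (simp add: algebra_simps)
          then have "exp (C * t) * \<rho> t $ i \<le> exp (C * t) * (C * \<rho> t $ i + D t $ i)"
            by (intro mult_left_mono) auto
          then show ?thesis by (simp add: algebra_simps)
        qed
        moreover have "0 < exp (C * t) * \<rho> t $ i" using xp by simp
        ultimately have lp: "0 < exp (C * t) * C * \<rho> t $ i + exp (C * t) * D t $ i" by linarith
        have "DERIV (f i) t :> (exp (C * t) * C * \<rho> t $ i + exp (C * t) * D t $ i)"
          using fder[OF ts(1), of i] int[OF t] by simp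
        from DERIV_pos_inc_right[OF this lp] obtain dd where dd: "dd > 0" "\<forall>h>0. h < dd \<longrightarrow> f i t < f i (t + h)"
          by blast
        show ?thesis unfolding eventually_at_right_field
        proof (intro exI[of _ "t + dd"] conjI allI impI)
          fix y assume "t < y" "y < t + dd"
          then show "f i t < f i y" using dd(2)[rule_format, of "y - t"] by simp
        qed (use dd in simp)
      qed
      have start: "exp (C * t0) * \<delta> \<le> f j t0" for j
        unfolding f_def using vmin_le[of "\<rho> t0" j] vt0 by simp
      obtain j where j: "vmin (\<rho> t1) = \<rho> t1 $ j" using vmin_ex by blast
      have "exp (C * t0) * \<delta> \<le> f j t1"
        by (rule mono_lemma[of t0 t1 f, OF _ cont iscont incr start]) (use t01 in auto)
      then have "exp (C * t0) * \<delta> \<le> exp (C * t1) * (\<delta> / 4)" using j vt1 by (simp add: f_def)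
      then have "4 * exp (C * t0) \<le> exp (C * t1)" using dp by (simp add: field_simps)
      then have "ln (4 * exp (C * t0)) \<le> ln (exp (C * t1))" by (subst ln_le_cancel_iff) auto
      then have "ln 4 + C * t0 \<le> C * t1" by (simp add: ln_mult)
      then have "ln 4 \<le> C * (t1 - t0)" by (simp add: algebra_simps)
      then show "c0 \<le> t1 - t0" unfolding c0_def using Cp by (simp add: divide_le_eq mult.commute)
    qed
    done
qed
end
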